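(* Fix a reflection matrix $\mathbf\Phi$ and let $(\{\mathbf W_k^{\star\star}\}_{k\in\mathcal K},\mathbf R_0^{\star\star},u^{\star\star})$ be an optimal solution of problem (SDR4.2). Define, for each $k\in\mathcal K$, $$\mathbf w_k^{\mathrm{opt,II}}=(\mathbf h_k^H\mathbf W_k^{\star\star}\mathbf h_k)^{-1/2}\,\mathbf W_k^{\star\star}\mathbf h_k,\qquad \mathbf R_0^{\mathrm{opt,II}}=\mathbf R_0^{\star\star}+\sum_{k\in\mathcal K}\mathbf W_k^{\star\star}-\sum_{k\in\mathcal K}\mathbf w_k^{\mathrm{opt,II}}(\mathbf w_k^{\mathrm{opt,II}})^H .$$ Then these are well defined, $\mathbf R_0^{\mathrm{opt,II}}\succeq\mathbf 0$, and $(\{\mathbf w_k^{\mathrm{opt,II}}\},\mathbf R_0^{\mathrm{opt,II}},u^{\star\star})$ is an optimal solution of problem (P4.2). In particular (P4.2) and (SDR4.2) have the same optimal value.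
   Context: Let $M,N,K\ge1$ be integers and $\mathcal K=\{1,\dots,K\}$. Fixed data: $\mathbf G\in\mathbb C^{N\times M}$, $\mathbf h_{\mathrm d,k}\in\mathbb C^{M}$, $\mathbf h_{\mathrm r,k}\in\mathbb C^{N}$ ($k\in\mathcal K$), thresholds $\Gamma_k>0$, noise powers $\sigma_k^2>0$, power budget $P_0>0$, an angle $\theta$, spacing $d>0$ and wavelength $\lambda>0$. A reflection matrix is $\mathbf\Phi=\mathrm{diag}(\mathbf v)$, $\mathbf v\in\mathbb C^N$, $|v_n|=1$. For given $\mathbf\Phi$: $\mathbf h_k=\mathbf h_{\mathrm d,k}+\mathbf G^H\mathbf\Phi^H\mathbf h_{\mathrm r,k}$, $\mathbf H_k=\mathbf h_k\mathbf h_k^H$. Let $\mathbf a(\theta)\in\mathbb C^N$ have entries $e^{j2\pi (n-1)d\sin\theta/\lambda}$, $n=1,\dots,N$, and $\dot{\mathbf a}(\theta)$ its derivative in $\theta$; put $\mathbf b=\mathbf G^T\mathbf\Phi^T\mathbf a(\theta)$, $\dot{\mathbf b}=\mathbf G^T\mathbf\Phi^T\dot{\mathbf a}(\theta)$, $\mathbf B=\mathbf b\mathbf b^T$, $\dot{\mathbf B}=\dot{\mathbf b}\mathbf b^T+\mathbf b\dot{\mathbf b}^T$. For Hermitian $\mathbf R$ and $u\in\mathbb R$ let $$\mathcal M(\mathbf R,u)=\begin{bmatrix}\mathrm{tr}(\dot{\mathbf B}\mathbf R\dot{\mathbf B}^H)-u & \mathrm{tr}(\mathbf B\mathbf R\dot{\mathbf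 B}^H)\\ \mathrm{tr}(\dot{\mathbf B}\mathbf R\mathbf B^H) & \mathrm{tr}(\mathbf B\mathbf R\mathbf B^H)\end{bmatrix}.$$ Type-II SINR: $\gamma_k^{\mathrm{II}}=|\mathbf h_k^H\mathbf w_k|^2/(\sum_{i\ne k}|\mathbf h_k^H\mathbf w_i|^2+\sigma_k^2)$. Problem (P4.2) (fixed $\mathbf\Phi$): maximize $u$ over $\mathbf w_k\in\mathbb C^M$, Hermitian $\mathbf R_0\succeq\mathbf 0$, $u\in\mathbb R$, subject to $\mathcal M(\sum_k\mathbf w_k\mathbf w_k^H+\mathbf R_0,u)\succeq\mathbf 0$, $\gamma_k^{\mathrm{II}}\ge\Gamma_k$ for all $k$, and $\sum_k\|\mathbf w_k\|^2+\mathrm{tr}(\mathbf R_0)\le P_0$. Problem (SDR4.2) (fixed $\mathbf\Phi$): maximize $u$ over Hermitian $\mathbf W_k\succeq\mathbf 0$, $\mathbf R_0\succeq\mathbf 0$, $u\in\mathbb R$, subject to $\mathcal M(\sum_k\mathbf W_k+\mathbf R_0,u)\succeq\mathbf 0$, $\tfrac1{\Gamma_k}\mathrm{tr}(\mathbf H_k\mathbf W_k)-\sum_{i\ne k}\mathrm{tr}(\mathbf H_k\mathbf W_i)\ge\sigma_k^2$ for all $k$, and $\sum_k\mathrm{tr}(\mathbf W_k)+\mathrm{tr}(\mathbf R_0)\le P_0$. *)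

theory Defs
  imports Complex_Main "Jordan_Normal_Form.Matrix"
begin

definition vcnj :: "complex vec \<Rightarrow> complex vec" where
  "vcnj x = vec (dim_vec x) (\<lambda>i. cnj (x $ i))"

definition cadj :: "complex mat \<Rightarrow> complex mat" where
  "cadj A = mat (dim_col A) (dim_row A) (\<lambda>(i,j). cnj (A $$ (j,i)))"

definition hinner :: "complex vec \<Rightarrow> complex vec \<Rightarrow> complex" where
  "hinner x y = vcnj x \<bullet> y"

definition outer :: "complex vec \<Rightarrow> complex mat" where
  "outer w = mat (dim_vec w) (dim_vec w) (\<lambda>(i,j). w $ i * cnj (w $ j))"

definition vnorm2 :: "complex vec \<Rightarrow> real" where
  "vnorm2 x = (\<Sum>i<dim_vec x. (cmod (x $ i))\<^sup>2)"

definition tr :: "complex mat \<Rightarrow> complex" where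
  "tr A = (\<Sum>i<dim_row A. A $$ (i,i))"

fun msum :: "nat \<Rightarrow> (nat \<Rightarrow> complex mat) \<Rightarrow> nat \<Rightarrow> complex mat" where
  "msum n f 0 = 0\<^sub>m n n"
| "msum n f (Suc k) = msum n f k + f k"

definition hermitian :: "complex mat \<Rightarrow> bool" where
  "hermitian A \<longleftrightarrow> cadj A = A"

definition psd :: "nat \<Rightarrow> complex mat \<Rightarrow> bool" where
  "psd n A \<longleftrightarrow> A \<in> carrier_mat n n \<and> hermitian A \<and>
     (\<forall>x \<in> carrier_vec n. hinner x (A *\<^sub>v x) \<in> \<real> \<and> 0 \<le> Re (hinner x (A *\<^sub>v x)))"

definition phi_mat :: "complex vec \<Rightarrow> complex mat" where
  "phi_mat v = mat (dim_vec v) (dim_vec v) (\<lambda>(i,j). if i = j then v $ i else 0)"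

definition reflection_vec :: "nat \<Rightarrow> complex vec \<Rightarrow> bool" where
  "reflection_vec N v \<longleftrightarrow> v \<in> carrier_vec N \<and> (\<forall>n<N. cmod (v $ n) = 1)"

definition chan :: "complex mat \<Rightarrow> complex vec \<Rightarrow> complex vec \<Rightarrow> complex vec \<Rightarrow> complex vec" where
  "chan G v hdk hrk = hdk + cadj G *\<^sub>v (cadj (phi_mat v) *\<^sub>v hrk)"

text \<open>entry n (0-based; the paper's index n-1) of the steering vector a(t)\<close>
definition steer_entry :: "real \<Rightarrow> real \<Rightarrow> nat \<Rightarrow> real \<Rightarrow> complex" where
  "steer_entry d lam n t = exp (\<i> * complex_of_real (2 * pi * real n * d * sin t / lam))"

definition steer :: "nat \<Rightarrow> real \<Rightarrow> real \<Rightarrow> real \<Rightarrow> complex vec" where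
  "steer N d lam \<theta> = vec N (\<lambda>n. steer_entry d lam n \<theta>)"

definition vderiv :: "(real \<Rightarrow> complex) \<Rightarrow> real \<Rightarrow> complex" where
  "vderiv f t = (SOME D. (f has_vector_derivative D) (at t))"

definition steer_dot :: "nat \<Rightarrow> real \<Rightarrow> real \<Rightarrow> real \<Rightarrow> complex vec" where
  "steer_dot N d lam \<theta> = vec N (\<lambda>n. vderiv (steer_entry d lam n) \<theta>)"

definition bvec :: "complex mat \<Rightarrow> complex vec \<Rightarrow> complex vec \<Rightarrow> complex vec" where
  "bvec G v a = transpose_mat G *\<^sub>v (transpose_mat (phi_mat v) *\<^sub>v a)"

definition Bmat :: "complex vec \<Rightarrow> complex mat" where
  "Bmat b = mat (dim_vec b) (dim_vec b) (\<lambda>(i,j). b $ i * b $ j)"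

definition Bdotmat :: "complex vec \<Rightarrow> complex vec \<Rightarrow> complex mat" where
  "Bdotmat b bd = mat (dim_vec b) (dim_vec b) (\<lambda>(i,j). bd $ i * b $ j + b $ i * bd $ j)"

definition Mmat :: "complex mat \<Rightarrow> complex mat \<Rightarrow> complex mat \<Rightarrow> real \<Rightarrow> complex mat" where
  "Mmat B Bd R u = mat 2 2 (\<lambda>(i,j).
     if i = 0 \<and> j = 0 then tr (Bd * R * cadj Bd) - complex_of_real u
     else if i = 0 \<and> j = 1 then tr (B * R * cadj Bd)
     else if i = 1 \<and> j = 0 then tr (Bd * R * cadj B)
     else tr (B * R * cadj B))"

definition sinr2 :: "nat \<Rightarrow> (nat \<Rightarrow> complex vec) \<Rightarrow> (nat \<Rightarrow> real) \<Rightarrow> (nat \<Rightarrow> complex vec) \<Rightarrow> nat \<Rightarrow> real" where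
  "sinr2 K h sigma2 w k =
     (cmod (hinner (h k) (w k)))\<^sup>2 /
     ((\<Sum>i\<in>{..<K} - {k}. (cmod (hinner (h k) (w i)))\<^sup>2) + sigma2 k)"

text \<open>Data: M antennas, K users (indexed 0..K-1), channels h, B, Bdot, SINR thresholds,
  noise powers, power budget.\<close>

definition P42_feasible ::
  "nat \<Rightarrow> nat \<Rightarrow> (nat \<Rightarrow> complex vec) \<Rightarrow> complex mat \<Rightarrow> complex mat \<Rightarrow>
   (nat \<Rightarrow> real) \<Rightarrow> (nat \<Rightarrow> real) \<Rightarrow> real \<Rightarrow>
   (nat \<Rightarrow> complex vec) \<Rightarrow> complex mat \<Rightarrow> real \<Rightarrow> bool" where
  "P42_feasible M K h B Bd Gam sigma2 P0 w R0 u \<longleftrightarrow>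
     (\<forall>k<K. w k \<in> carrier_vec M) \<and> psd M R0 \<and>
     psd 2 (Mmat B Bd (msum M (\<lambda>k. outer (w k)) K + R0) u) \<and>
     (\<forall>k<K. sinr2 K h sigma2 w k \<ge> Gam k) \<and>
     (\<Sum>k<K. vnorm2 (w k)) + Re (tr R0) \<le> P0"

definition P42_optimal ::
  "nat \<Rightarrow> nat \<Rightarrow> (nat \<Rightarrow> complex vec) \<Rightarrow> complex mat \<Rightarrow> complex mat \<Rightarrow>
   (nat \<Rightarrow> real) \<Rightarrow> (nat \<Rightarrow> real) \<Rightarrow> real \<Rightarrow>
   (nat \<Rightarrow> complex vec) \<Rightarrow> complex mat \<Rightarrow> real \<Rightarrow> bool" where
  "P42_optimal M K h B Bd Gam sigma2 P0 w R0 u \<longleftrightarrow>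
     P42_feasible M K h B Bd Gam sigma2 P0 w R0 u \<and>
     (\<forall>w' R0' u'. P42_feasible M K h B Bd Gam sigma2 P0 w' R0' u' \<longrightarrow> u' \<le> u)"

definition SDR42_feasible ::
  "nat \<Rightarrow> nat \<Rightarrow> (nat \<Rightarrow> complex vec) \<Rightarrow> complex mat \<Rightarrow> complex mat \<Rightarrow>
   (nat \<Rightarrow> real) \<Rightarrow> (nat \<Rightarrow> real) \<Rightarrow> real \<Rightarrow>
   (nat \<Rightarrow> complex mat) \<Rightarrow> complex mat \<Rightarrow> real \<Rightarrow> bool" where
  "SDR42_feasible M K h B Bd Gam sigma2 P0 W R0 u \<longleftrightarrow>
     (\<forall>k<K. psd M (W k)) \<and> psd M R0 \<and>
     psd 2 (Mmat B Bd (msum M W K + R0) u) \<and>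
     (\<forall>k<K. Re (tr (outer (h k) * W k)) / Gam k
             - (\<Sum>i\<in>{..<K} - {k}. Re (tr (outer (h k) * W i))) \<ge> sigma2 k) \<and>
     (\<Sum>k<K. Re (tr (W k))) + Re (tr R0) \<le> P0"

definition SDR42_optimal ::
  "nat \<Rightarrow> nat \<Rightarrow> (nat \<Rightarrow> complex vec) \<Rightarrow> complex mat \<Rightarrow> complex mat \<Rightarrow>
   (nat \<Rightarrow> real) \<Rightarrow> (nat \<Rightarrow> real) \<Rightarrow> real \<Rightarrow>
   (nat \<Rightarrow> complex mat) \<Rightarrow> complex mat \<Rightarrow> real \<Rightarrow> bool" where
  "SDR42_optimal M K h B Bd Gam sigma2 P0 W R0 u \<longleftrightarrow>
     SDR42_feasible M K h B Bd Gam sigma2 P0 W R0 u \<and>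
     (\<forall>W' R0' u'. SDR42_feasible M K h B Bd Gam sigma2 P0 W' R0' u' \<longrightarrow> u' \<le> u)"

end

theory Submission imports Defs begin


lemma hinner_sum: "x \<in> carrier_vec n \<Longrightarrow> y \<in> carrier_vec n \<Longrightarrow>
  hinner x y = (\<Sum>i<n. cnj (x$i) * y$i)"
  unfolding hinner_def vcnj_def scalar_prod_def by (auto simp: atLeast0LessThan)

lemma quad_expand: "A \<in> carrier_mat n n \<Longrightarrow> x \<in> carrier_vec n \<Longrightarrow> y \<in> carrier_vec n \<Longrightarrow>
  hinner x (A *\<^sub>v y) = (\<Sum>i<n. \<Sum>j<n. cnj (x$i) * A$$(i,j) * y$j)"
  apply (subst hinner_sum[of _ n])
    apply auto
  apply (rule sum.cong, simp)
  apply (auto simp: row_def scalar_prod_def sum_distrib_left atLeast0LessThan mult.assoc)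
  done

lemma index_msum: "(\<And>k. k<K \<Longrightarrow> f k \<in> carrier_mat n n) \<Longrightarrow>
   msum n f K \<in> carrier_mat n n \<and> (\<forall>i<n. \<forall>j<n. msum n f K $$ (i,j) = (\<Sum>k<K. f k $$ (i,j)))"
proof (induction K)
  case 0 then show ?case by auto
next
  case (Suc K)
  then have c: "msum n f K \<in> carrier_mat n n" and e: "\<forall>i<n. \<forall>j<n. msum n f K $$ (i,j) = (\<Sum>k<K. f k $$ (i,j))" by auto
  have fK: "f K \<in> carrier_mat n n" using Suc.prems by auto
  show ?case using c e fK by auto
qed

lemma quad_add: "A \<in> carrier_mat n n \<Longrightarrow> B \<in> carrier_mat n n \<Longrightarrow> x \<in> carrier_vec n \<Longrightarrow> y \<in> carrier_vec n \<Longrightarrow>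
  hinner x ((A + B) *\<^sub>v y) = hinner x (A *\<^sub>v y) + hinner x (B *\<^sub>v y)"
proof -
  assume a: "A \<in> carrier_mat n n" "B \<in> carrier_mat n n" "x \<in> carrier_vec n" "y \<in> carrier_vec n"
  have c: "A + B \<in> carrier_mat n n" using a by simp
  show ?thesis
    unfolding quad_expand[OF c a(3,4)] quad_expand[OF a(1) a(3,4)] quad_expand[OF a(2) a(3,4)]
    using a by (simp add: sum.distrib algebra_simps)
qed

lemma quad_minus: "A \<in> carrier_mat n n \<Longrightarrow> B \<in> carrier_mat n n \<Longrightarrow> x \<in> carrier_vec n \<Longrightarrow> y \<in> carrier_vec n \<Longrightarrow>
  hinner x ((A - B) *\<^sub>v y) = hinner x (A *\<^sub>v y) - hinner x (B *\<^sub>v y)"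
proof -
  assume a: "A \<in> carrier_mat n n" "B \<in> carrier_mat n n" "x \<in> carrier_vec n" "y \<in> carrier_vec n"
  have c: "A - B \<in> carrier_mat n n" using a by (simp add: minus_carrier_mat)
  show ?thesis
    unfolding quad_expand[OF c a(3,4)] quad_expand[OF a(1) a(3,4)] quad_expand[OF a(2) a(3,4)]
    using a by (simp add: sum_subtractf algebra_simps)
qed

lemma quad_msum: "(\<And>k. k<K \<Longrightarrow> f k \<in> carrier_mat n n) \<Longrightarrow> x \<in> carrier_vec n \<Longrightarrow> y \<in> carrier_vec n \<Longrightarrow>
  hinner x (msum n f K *\<^sub>v y) = (\<Sum>k<K. hinner x (f k *\<^sub>v y))"
proof (induction K)
  case 0 then show ?case by (simp add: quad_expand[of _ n])
next
  case (Suc K)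
  have "msum n f K \<in> carrier_mat n n" using index_msum[of K f n] Suc.prems by auto
  then show ?case using Suc by (simp add: quad_add[of _ n])
qed

lemma tr_add: "A \<in> carrier_mat n n \<Longrightarrow> B \<in> carrier_mat n n \<Longrightarrow> tr (A + B) = tr A + tr B"
  by (simp add: tr_def sum.distrib)

lemma tr_minus: "A \<in> carrier_mat n n \<Longrightarrow> B \<in> carrier_mat n n \<Longrightarrow> tr (A - B) = tr A - tr B"
  by (simp add: tr_def sum_subtractf)

lemma tr_msum: "(\<And>k. k<K \<Longrightarrow> f k \<in> carrier_mat n n) \<Longrightarrow> tr (msum n f K) = (\<Sum>k<K. tr (f k))"
proof (induction K)
  case 0 then show ?case by (simp add: tr_def)
next
  case (Suc K)
  have "msum n f K \<in> carrier_mat n n" using index_msum[of K f n] Suc.prems by auto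
  then show ?case using Suc by (simp add: tr_add[of _ n])
qed

lemma outer_carrier[simp]: "w \<in> carrier_vec n \<Longrightarrow> outer w \<in> carrier_mat n n"
  by (simp add: outer_def)

lemma tr_outer: "tr (outer w) = complex_of_real (vnorm2 w)"
  unfolding tr_def outer_def vnorm2_def
  by (simp add: complex_norm_square[symmetric])

lemma tr_outer_mult: "h \<in> carrier_vec n \<Longrightarrow> W \<in> carrier_mat n n \<Longrightarrow>
   tr (outer h * W) = hinner h (W *\<^sub>v h)"
  apply (simp add: quad_expand[of _ n] tr_def outer_def scalar_prod_def row_def col_def atLeast0LessThan)
  apply (subst sum.swap)
  apply (simp add: sum_distrib_left algebra_simps)
  done

lemma quad_outer: "w \<in> carrier_vec n \<Longrightarrow> x \<in> carrier_vec n \<Longrightarrow> y \<in> carrier_vec n \<Longrightarrow>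
   hinner x (outer w *\<^sub>v y) = hinner x w * cnj (hinner y w)"
  apply (simp add: quad_expand[of _ n] hinner_sum[of _ n] outer_def sum_distrib_left sum_distrib_right algebra_simps)
  apply (subst sum.swap) apply (simp add: algebra_simps)
  done

lemma hinner_smult: "hinner x (c \<cdot>\<^sub>v y) = c * hinner x y"
  unfolding hinner_def vcnj_def scalar_prod_def by (simp add: sum_distrib_left algebra_simps)

lemma hinner_cnj: "x \<in> carrier_vec n \<Longrightarrow> y \<in> carrier_vec n \<Longrightarrow> hinner y x = cnj (hinner x y)"
  by (simp add: hinner_sum[of _ n] mult.commute)

lemma herm_entry: "W \<in> carrier_mat n n \<Longrightarrow> hermitian W \<Longrightarrow> i < n \<Longrightarrow> j < n \<Longrightarrow> W $$ (i,j) = cnj (W $$ (j,i))"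
  unfolding hermitian_def cadj_def
  by (metis carrier_matD(1) carrier_matD(2) case_prod_conv index_mat(1))

lemma herm_quad: "W \<in> carrier_mat n n \<Longrightarrow> hermitian W \<Longrightarrow> x \<in> carrier_vec n \<Longrightarrow> y \<in> carrier_vec n \<Longrightarrow>
   hinner y (W *\<^sub>v x) = cnj (hinner x (W *\<^sub>v y))"
  apply (simp add: quad_expand[of _ n])
  apply (subst sum.swap)
  apply (rule sum.cong, simp)+
  apply (subst herm_entry[of W n], auto)
  done

lemma quad_comb: assumes W: "W \<in> carrier_mat n n" and x: "x \<in> carrier_vec n" and y: "y \<in> carrier_vec n"
  shows "hinner (x - s \<cdot>\<^sub>v y) (W *\<^sub>v (x - s \<cdot>\<^sub>v y)) =
    hinner x (W *\<^sub>v x) - s * hinner x (W *\<^sub>v y) - cnj s * hinner y (W *\<^sub>v x) + s * cnj s * hinner y (W *\<^sub>v y)"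
proof -
  have z: "x - s \<cdot>\<^sub>v y \<in> carrier_vec n" using x y by simp
  show ?thesis
    unfolding quad_expand[OF W z z] quad_expand[OF W x x] quad_expand[OF W x y] quad_expand[OF W y x] quad_expand[OF W y y]
    using x y by (simp add: sum_distrib_left sum_subtractf sum.distrib algebra_simps)
qed

lemma cs: assumes W: "W \<in> carrier_mat n n" and h: "hermitian W"
  and p: "\<And>z. z \<in> carrier_vec n \<Longrightarrow> hinner z (W *\<^sub>v z) \<in> \<real> \<and> 0 \<le> Re (hinner z (W *\<^sub>v z))"
  and x: "x \<in> carrier_vec n" and y: "y \<in> carrier_vec n"
  and c: "Re (hinner y (W *\<^sub>v y)) > 0"
  shows "(cmod (hinner x (W *\<^sub>v y)))\<^sup>2 \<le> Re (hinner x (W *\<^sub>v x)) * Re (hinner y (W *\<^sub>v y))"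
proof -
  define a where "a = Re (hinner x (W *\<^sub>v x))"
  define cc where "cc = Re (hinner y (W *\<^sub>v y))"
  define \<beta> where "\<beta> = hinner x (W *\<^sub>v y)"
  define s where "s = cnj \<beta> / complex_of_real cc"
  have ax: "hinner x (W *\<^sub>v x) = complex_of_real a" using p[OF x] unfolding a_def
    by (metis Reals_cases Re_complex_of_real)
  have cy: "hinner y (W *\<^sub>v y) = complex_of_real cc" using p[OF y] unfolding cc_def
    by (metis Reals_cases Re_complex_of_real)
  have yx: "hinner y (W *\<^sub>v x) = cnj \<beta>" unfolding \<beta>_def using herm_quad[OF W h x y] .
  have z: "x - s \<cdot>\<^sub>v y \<in> carrier_vec n" using x y by simp
  have "0 \<le> Re (hinner (x - s \<cdot>\<^sub>v y) (W *\<^sub>v (x - s \<cdot>\<^sub>v y)))" using p[OF z] by auto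
  also have "hinner (x - s \<cdot>\<^sub>v y) (W *\<^sub>v (x - s \<cdot>\<^sub>v y)) = complex_of_real a - s * \<beta> - cnj s * cnj \<beta> + s * cnj s * complex_of_real cc"
    unfolding quad_comb[OF W x y] ax cy yx \<beta>_def by simp
  also have "\<dots> = complex_of_real (a - (cmod \<beta>)\<^sup>2 / cc)"
  proof -
    have nb: "complex_of_real (cmod \<beta>) * complex_of_real (cmod \<beta>) = \<beta> * cnj \<beta>"
      using complex_norm_square[of \<beta>] by (simp add: power2_eq_square)
    show ?thesis using c nb unfolding s_def cc_def[symmetric]
      by (simp add: field_simps power2_eq_square)
  qed
  finally have "0 \<le> a - (cmod \<beta>)\<^sup>2 / cc" by simp
  then show ?thesis using c unfolding a_def[symmetric] cc_def[symmetric] \<beta>_def[symmetric]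
    by (simp add: field_simps)
qed

lemma herm_entries: "A \<in> carrier_mat n n \<Longrightarrow> hermitian A \<longleftrightarrow> (\<forall>i<n. \<forall>j<n. A$$(i,j) = cnj (A$$(j,i)))"
proof -
  assume A: "A \<in> carrier_mat n n"
  have r: "cadj A = A" if e: "\<forall>i<n. \<forall>j<n. A$$(i,j) = cnj (A$$(j,i))"
  proof (rule eq_matI)
    fix i j assume i: "i < dim_row A" and j: "j < dim_col A"
    have i': "i < n" and j': "j < n" using i j A by auto
    have "cadj A $$ (i,j) = cnj (A $$ (j,i))" unfolding cadj_def using i' j' A by simp
    also have "\<dots> = A $$ (i,j)"
    proof -
      have "A$$(j,i) = cnj (A$$(i,j))" using e i' j' by blast
      then show ?thesis by simp
    qed
    finally show "cadj A $$ (i,j) = A $$ (i,j)" .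
  next
    show "dim_row (cadj A) = dim_row A" using A by (simp add: cadj_def)
  next
    show "dim_col (cadj A) = dim_col A" using A by (simp add: cadj_def)
  qed
  show ?thesis
  proof
    assume "hermitian A" then show "\<forall>i<n. \<forall>j<n. A$$(i,j) = cnj (A$$(j,i))"
      using herm_entry[OF A] by blast
  next
    assume "\<forall>i<n. \<forall>j<n. A$$(i,j) = cnj (A$$(j,i))" then show "hermitian A"
      unfolding hermitian_def using r by blast
  qed
qed

lemma cadj_carrier: "A \<in> carrier_mat m n \<Longrightarrow> cadj A \<in> carrier_mat n m"
  by (simp add: cadj_def)

lemma quad_outer_self: "w \<in> carrier_vec n \<Longrightarrow> x \<in> carrier_vec n \<Longrightarrow>
  hinner x (outer w *\<^sub>v x) = complex_of_real ((cmod (hinner x w))\<^sup>2)"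
  by (simp add: quad_outer[of _ n] complex_norm_square[symmetric])

lemma psd_outer: "w \<in> carrier_vec n \<Longrightarrow> psd n (outer w)"
proof -
  assume w: "w \<in> carrier_vec n"
  have "hermitian (outer w)"
    by (subst herm_entries[of _ n]) (use w in \<open>auto simp: outer_def\<close>)
  then show ?thesis unfolding psd_def using w by (simp add: quad_outer_self[of _ n])
qed

lemma tr_outer_outer: "h \<in> carrier_vec n \<Longrightarrow> w \<in> carrier_vec n \<Longrightarrow>
   Re (tr (outer h * outer w)) = (cmod (hinner h w))\<^sup>2"
  by (simp add: tr_outer_mult[of _ n] quad_outer_self[of _ n])

lemma psd_real: "psd n A \<Longrightarrow> x \<in> carrier_vec n \<Longrightarrow> hinner x (A *\<^sub>v x) = complex_of_real (Re (hinner x (A *\<^sub>v x)))"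
  unfolding psd_def by (metis Reals_cases Re_complex_of_real)


theorem proposition8:
  fixes M N K :: nat
    and G :: "complex mat"
    and hdir :: "nat \<Rightarrow> complex vec" and hrefl :: "nat \<Rightarrow> complex vec"
    and Gam sigma2 :: "nat \<Rightarrow> real" and P0 \<theta> d lam :: real
    and v :: "complex vec"
    and Wss :: "nat \<Rightarrow> complex mat" and R0ss :: "complex mat" and uss :: real
  assumes dims: "M \<ge> 1" "N \<ge> 1" "K \<ge> 1"
    and G: "G \<in> carrier_mat N M"
    and hdir: "\<And>k. k < K \<Longrightarrow> hdir k \<in> carrier_vec M"
    and hrefl: "\<And>k. k < K \<Longrightarrow> hrefl k \<in> carrier_vec N"
    and Gam: "\<And>k. k < K \<Longrightarrow> Gam k > 0"
    and sigma2: "\<And>k. k < K \<Longrightarrow> sigma2 k > 0"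
    and P0: "P0 > 0" and d: "d > 0" and lam: "lam > 0"
    and v: "reflection_vec N v"
  defines "h \<equiv> (\<lambda>k. chan G v (hdir k) (hrefl k))"
    and "b \<equiv> bvec G v (steer N d lam \<theta>)"
    and "bd \<equiv> bvec G v (steer_dot N d lam \<theta>)"
  assumes opt: "SDR42_optimal M K h (Bmat b) (Bdotmat b bd) Gam sigma2 P0 Wss R0ss uss"
  defines "wopt \<equiv> (\<lambda>k. (1 / sqrt (Re (hinner (h k) (Wss k *\<^sub>v h k)))) \<cdot>\<^sub>v (Wss k *\<^sub>v h k))"
  defines "R0opt \<equiv> R0ss + msum M Wss K - msum M (\<lambda>k. outer (wopt k)) K"
  shows "(\<forall>k<K. hinner (h k) (Wss k *\<^sub>v h k) \<in> \<real> \<and> Re (hinner (h k) (Wss k *\<^sub>v h k)) > 0)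
       \<and> psd M R0opt
       \<and> P42_optimal M K h (Bmat b) (Bdotmat b bd) Gam sigma2 P0 wopt R0opt uss
       \<and> Sup {u. \<exists>w R0. P42_feasible M K h (Bmat b) (Bdotmat b bd) Gam sigma2 P0 w R0 u}
         = Sup {u. \<exists>W R0. SDR42_feasible M K h (Bmat b) (Bdotmat b bd) Gam sigma2 P0 W R0 u}"
  proof -
  from opt have sf: "SDR42_feasible M K h (Bmat b) (Bdotmat b bd) Gam sigma2 P0 Wss R0ss uss"
    and smax: "\<And>W' R0' u'. SDR42_feasible M K h (Bmat b) (Bdotmat b bd) Gam sigma2 P0 W' R0' u' \<Longrightarrow> u' \<le> uss"
    unfolding SDR42_optimal_def by auto
  from sf have Wpsd: "\<And>k. k<K \<Longrightarrow> psd M (Wss k)" and R0psd: "psd M R0ss"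
    and Mpsd: "psd 2 (Mmat (Bmat b) (Bdotmat b bd) (msum M Wss K + R0ss) uss)"
    and sc: "\<And>k. k<K \<Longrightarrow> Re (tr (outer (h k) * Wss k)) / Gam k
             - (\<Sum>i\<in>{..<K} - {k}. Re (tr (outer (h k) * Wss i))) \<ge> sigma2 k"
    and pw: "(\<Sum>k<K. Re (tr (Wss k))) + Re (tr R0ss) \<le> P0"
    unfolding SDR42_feasible_def by auto
  have Wc: "\<And>k. k<K \<Longrightarrow> Wss k \<in> carrier_mat M M" using Wpsd unfolding psd_def by auto
  have Wh: "\<And>k. k<K \<Longrightarrow> hermitian (Wss k)" using Wpsd unfolding psd_def by auto
  have Wp: "\<And>k z. k<K \<Longrightarrow> z \<in> carrier_vec M \<Longrightarrow> hinner z (Wss k *\<^sub>v z) \<in> \<real> \<and> 0 \<le> Re (hinner z (Wss k *\<^sub>v z))"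
    using Wpsd unfolding psd_def by auto
  have R0c: "R0ss \<in> carrier_mat M M" using R0psd unfolding psd_def by auto
  have phic: "phi_mat v \<in> carrier_mat N N" using v unfolding reflection_vec_def phi_mat_def by auto
  have hc: "\<And>k. k<K \<Longrightarrow> h k \<in> carrier_vec M"
  proof -
    fix k assume k: "k<K"
    have "cadj G \<in> carrier_mat M N" using cadj_carrier[OF G] .
    moreover have "cadj (phi_mat v) *\<^sub>v hrefl k \<in> carrier_vec N"
      using cadj_carrier[OF phic] hrefl[OF k] by auto
    ultimately show "h k \<in> carrier_vec M" unfolding h_def chan_def using hdir[OF k] by auto
  qed
  define q where "q = (\<lambda>k. Re (hinner (h k) (Wss k *\<^sub>v h k)))"
  have trq: "\<And>k i. k<K \<Longrightarrow> i<K \<Longrightarrow> tr (outer (h k) * Wss i) = hinner (h k) (Wss i *\<^sub>v h k)"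
    using tr_outer_mult hc Wc by blast
  have Qnn: "\<And>k i. k<K \<Longrightarrow> i<K \<Longrightarrow> 0 \<le> Re (hinner (h k) (Wss i *\<^sub>v h k))"
    using Wp hc by blast
  have qpos: "\<And>k. k<K \<Longrightarrow> q k > 0"
  proof -
    fix k assume k: "k<K"
    have "0 \<le> (\<Sum>i\<in>{..<K} - {k}. Re (tr (outer (h k) * Wss i)))"
      by (rule sum_nonneg) (use trq Qnn k in auto)
    then have "Re (tr (outer (h k) * Wss k)) / Gam k > 0" using sc[OF k] sigma2[OF k] by linarith
    then show "q k > 0" using Gam[OF k] trq[OF k k] unfolding q_def by (simp add: zero_less_divide_iff)
  qed
  have part1: "\<forall>k<K. hinner (h k) (Wss k *\<^sub>v h k) \<in> \<real> \<and> Re (hinner (h k) (Wss k *\<^sub>v h k)) > 0"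
    using Wp hc qpos unfolding q_def by auto
  have qreal: "\<And>k. k<K \<Longrightarrow> hinner (h k) (Wss k *\<^sub>v h k) = complex_of_real (q k)"
    unfolding q_def using psd_real[OF Wpsd hc] by blast
  have wopt_eq: "\<And>k. wopt k = (1 / sqrt (q k)) \<cdot>\<^sub>v (Wss k *\<^sub>v h k)" unfolding wopt_def q_def by simp
  have woc: "\<And>k. k<K \<Longrightarrow> wopt k \<in> carrier_vec M" unfolding wopt_eq using Wc hc by (meson mult_mat_vec_carrier smult_carrier_vec)
  have hw: "\<And>k x. hinner x (wopt k) = complex_of_real (1 / sqrt (q k)) * hinner x (Wss k *\<^sub>v h k)"
    unfolding wopt_eq hinner_smult by simp
  have hwsq: "\<And>k x. k<K \<Longrightarrow> (cmod (hinner x (wopt k)))\<^sup>2 = (cmod (hinner x (Wss k *\<^sub>v h k)))\<^sup>2 / q k"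
  proof -
    fix k x assume k: "k<K"
    have "(cmod (hinner x (wopt k)))\<^sup>2 = (1 / sqrt (q k))\<^sup>2 * (cmod (hinner x (Wss k *\<^sub>v h k)))\<^sup>2"
      unfolding hw norm_mult power_mult_distrib norm_of_real using qpos[OF k] by simp
    then show "?thesis k x" using qpos[OF k] by (simp add: power_divide)
  qed
  have csk: "\<And>k x. k<K \<Longrightarrow> x \<in> carrier_vec M \<Longrightarrow> (cmod (hinner x (wopt k)))\<^sup>2 \<le> Re (hinner x (Wss k *\<^sub>v x))"
  proof -
    fix k and x :: "complex vec" assume k: "k<K" and x: "x \<in> carrier_vec M"
    have "(cmod (hinner x (Wss k *\<^sub>v h k)))\<^sup>2 \<le> Re (hinner x (Wss k *\<^sub>v x)) * q k"
      unfolding q_def by (rule cs[OF Wc[OF k] Wh[OF k] Wp[OF k] x hc[OF k]]) (use qpos[OF k] q_def in auto)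
    then show "(cmod (hinner x (wopt k)))\<^sup>2 \<le> Re (hinner x (Wss k *\<^sub>v x))"
      unfolding hwsq[OF k] using qpos[OF k] by (simp add: divide_le_eq)
  qed
  have sig: "\<And>k. k<K \<Longrightarrow> (cmod (hinner (h k) (wopt k)))\<^sup>2 = q k"
  proof -
    fix k assume k: "k<K"
    show "?thesis k" unfolding hwsq[OF k] qreal[OF k] using qpos[OF k]
      by (simp add: power2_eq_square)
  qed
  have oc: "\<And>k. k<K \<Longrightarrow> outer (wopt k) \<in> carrier_mat M M" using woc by simp
  have msW: "msum M Wss K \<in> carrier_mat M M \<and> (\<forall>i<M. \<forall>j<M. msum M Wss K $$ (i,j) = (\<Sum>k<K. Wss k $$ (i,j)))"
    by (rule index_msum) (rule Wc)
  have msO: "msum M (\<lambda>k. outer (wopt k)) K \<in> carrier_mat M M \<and> (\<forall>i<M. \<forall>j<M. msum M (\<lambda>k. outer (wopt k)) K $$ (i,j) = (\<Sum>k<K. outer (wopt k) $$ (i,j)))"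
    by (rule index_msum) (rule oc)
  have sumc: "R0ss + msum M Wss K \<in> carrier_mat M M" using msW R0c by auto
  have R0oc: "R0opt \<in> carrier_mat M M" unfolding R0opt_def using msW msO R0c
    by (meson add_carrier_mat minus_carrier_mat)
  have R0ent: "\<And>i j. i<M \<Longrightarrow> j<M \<Longrightarrow> R0opt $$ (i,j) = R0ss $$ (i,j) + (\<Sum>k<K. Wss k $$ (i,j)) - (\<Sum>k<K. outer (wopt k) $$ (i,j))"
    unfolding R0opt_def using msW msO R0c by auto
  have R0herm: "hermitian R0opt"
  proof (subst herm_entries[OF R0oc], intro allI impI)
    fix i j assume i: "i<M" and j: "j<M"
    have a: "R0ss $$ (i,j) = cnj (R0ss $$ (j,i))" using herm_entry[OF R0c _ i j] R0psd unfolding psd_def by auto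
    have b: "\<And>k. k<K \<Longrightarrow> Wss k $$ (i,j) = cnj (Wss k $$ (j,i))" using herm_entry[OF Wc Wh i j] by auto
    have c: "\<And>k. k<K \<Longrightarrow> outer (wopt k) $$ (i,j) = cnj (outer (wopt k) $$ (j,i))"
    proof -
      fix k assume "k<K" then have "dim_vec (wopt k) = M" using woc by auto
      then show "?thesis k" using i j unfolding outer_def by auto
    qed
    show "R0opt $$ (i,j) = cnj (R0opt $$ (j,i))"
      unfolding R0ent[OF i j] R0ent[OF j i] using a b c by (simp add: cnj_sum)
  qed
  have R0quad: "\<And>x. x \<in> carrier_vec M \<Longrightarrow> hinner x (R0opt *\<^sub>v x) =
       complex_of_real (Re (hinner x (R0ss *\<^sub>v x)) + (\<Sum>k<K. Re (hinner x (Wss k *\<^sub>v x)) - (cmod (hinner x (wopt k)))\<^sup>2))"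
  proof -
    fix x :: "complex vec" assume x: "x \<in> carrier_vec M"
    have e1: "hinner x (R0opt *\<^sub>v x) = hinner x (R0ss *\<^sub>v x) + (\<Sum>k<K. hinner x (Wss k *\<^sub>v x)) - (\<Sum>k<K. hinner x (outer (wopt k) *\<^sub>v x))"
      unfolding R0opt_def
      using quad_add[OF R0c conjunct1[OF msW] x x] quad_minus[OF sumc conjunct1[OF msO] x x]
        quad_msum[of K Wss M, OF Wc x x] quad_msum[of K "\<lambda>k. outer (wopt k)" M, OF oc x x] by simp
    have e2: "\<And>k. k<K \<Longrightarrow> hinner x (Wss k *\<^sub>v x) = complex_of_real (Re (hinner x (Wss k *\<^sub>v x)))"
      using psd_real[OF Wpsd x] by blast
    have e3: "\<And>k. k<K \<Longrightarrow> hinner x (outer (wopt k) *\<^sub>v x) = complex_of_real ((cmod (hinner x (wopt k)))\<^sup>2)"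
      using quad_outer_self woc x by blast
    have e4: "hinner x (R0ss *\<^sub>v x) = complex_of_real (Re (hinner x (R0ss *\<^sub>v x)))"
      using psd_real[OF R0psd x] .
    show "?thesis x" unfolding e1 using e2 e3 e4
      by (simp add: sum_subtractf)
  qed
  have R0opsd: "psd M R0opt"
    unfolding psd_def
  proof (intro conjI R0oc R0herm ballI)
    fix x :: "complex vec" assume x: "x \<in> carrier_vec M"
    show "hinner x (R0opt *\<^sub>v x) \<in> \<real>" unfolding R0quad[OF x] by simp
    have "0 \<le> Re (hinner x (R0ss *\<^sub>v x))" using R0psd x unfolding psd_def by auto
    moreover have "0 \<le> (\<Sum>k<K. Re (hinner x (Wss k *\<^sub>v x)) - (cmod (hinner x (wopt k)))\<^sup>2)"
      by (rule sum_nonneg) (use csk x in auto)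
    ultimately show "0 \<le> Re (hinner x (R0opt *\<^sub>v x))" unfolding R0quad[OF x] by simp
  qed
  have Meq: "msum M (\<lambda>k. outer (wopt k)) K + R0opt = msum M Wss K + R0ss"
    apply (rule eq_matI)
    using msW msO R0c R0oc R0ent by auto
  have sinr_ok: "\<And>k. k<K \<Longrightarrow> sinr2 K h sigma2 wopt k \<ge> Gam k"
  proof -
    fix k assume k: "k<K"
    define S where "S = (\<Sum>i\<in>{..<K} - {k}. Re (hinner (h k) (Wss i *\<^sub>v h k)))"
    define I where "I = (\<Sum>i\<in>{..<K} - {k}. (cmod (hinner (h k) (wopt i)))\<^sup>2)"
    have "S = (\<Sum>i\<in>{..<K} - {k}. Re (tr (outer (h k) * Wss i)))"
      unfolding S_def by (rule sum.cong) (use trq k in auto)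
    then have c1: "q k / Gam k - S \<ge> sigma2 k" using sc[OF k] trq[OF k k] unfolding q_def by simp
    have IS: "I \<le> S" unfolding I_def S_def
      by (rule sum_mono) (use csk hc k in auto)
    have I0: "0 \<le> I" unfolding I_def by (rule sum_nonneg) auto
    have D: "I + sigma2 k > 0" using I0 sigma2[OF k] by linarith
    have a1: "q k \<ge> Gam k * (S + sigma2 k)" using c1 Gam[OF k] by (simp add: field_simps)
    have a2: "Gam k * (S + sigma2 k) \<ge> Gam k * (I + sigma2 k)" using IS Gam[OF k] by simp
    have "q k \<ge> Gam k * (I + sigma2 k)" using a1 a2 by linarith
    then have "q k / (I + sigma2 k) \<ge> Gam k" using D by (simp add: le_divide_eq)
    then show "sinr2 K h sigma2 wopt k \<ge> Gam k" unfolding sinr2_def sig[OF k] I_def by simp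
  qed
  have pow_ok: "(\<Sum>k<K. vnorm2 (wopt k)) + Re (tr R0opt) \<le> P0"
  proof -
    have t1: "tr (msum M Wss K) = (\<Sum>k<K. tr (Wss k))" by (rule tr_msum) (rule Wc)
    have t2: "tr (msum M (\<lambda>k. outer (wopt k)) K) = (\<Sum>k<K. tr (outer (wopt k)))" by (rule tr_msum) (rule oc)
    have "tr R0opt = tr R0ss + (\<Sum>k<K. tr (Wss k)) - (\<Sum>k<K. tr (outer (wopt k)))"
      unfolding R0opt_def tr_minus[OF sumc conjunct1[OF msO]] tr_add[OF R0c conjunct1[OF msW]]
        t1 t2 by simp
    then have "Re (tr R0opt) = Re (tr R0ss) + (\<Sum>k<K. Re (tr (Wss k))) - (\<Sum>k<K. vnorm2 (wopt k))"
      by (simp add: tr_outer)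
    then show ?thesis using pw by simp
  qed
  have feas: "P42_feasible M K h (Bmat b) (Bdotmat b bd) Gam sigma2 P0 wopt R0opt uss"
    unfolding P42_feasible_def Meq using woc R0opsd Mpsd sinr_ok pow_ok by auto
  have maxP: "\<And>w' R0' u'. P42_feasible M K h (Bmat b) (Bdotmat b bd) Gam sigma2 P0 w' R0' u' \<Longrightarrow> u' \<le> uss"
  proof -
    fix w' R0' u' assume f: "P42_feasible M K h (Bmat b) (Bdotmat b bd) Gam sigma2 P0 w' R0' u'"
    from f have wc': "\<And>k. k<K \<Longrightarrow> w' k \<in> carrier_vec M" and R0p': "psd M R0'"
      and Mp': "psd 2 (Mmat (Bmat b) (Bdotmat b bd) (msum M (\<lambda>k. outer (w' k)) K + R0') u')"
      and si': "\<And>k. k<K \<Longrightarrow> sinr2 K h sigma2 w' k \<ge> Gam k"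
      and pw': "(\<Sum>k<K. vnorm2 (w' k)) + Re (tr R0') \<le> P0"
      unfolding P42_feasible_def by auto
    have c: "\<And>k. k<K \<Longrightarrow> Re (tr (outer (h k) * outer (w' k))) / Gam k
             - (\<Sum>i\<in>{..<K} - {k}. Re (tr (outer (h k) * outer (w' i)))) \<ge> sigma2 k"
    proof -
      fix k assume k: "k<K"
      define I where "I = (\<Sum>i\<in>{..<K} - {k}. (cmod (hinner (h k) (w' i)))\<^sup>2)"
      have eI: "(\<Sum>i\<in>{..<K} - {k}. Re (tr (outer (h k) * outer (w' i)))) = I"
        unfolding I_def by (rule sum.cong) (use hc wc' k in \<open>auto intro!: tr_outer_outer\<close>)
      have I0: "0 \<le> I" unfolding I_def by (rule sum_nonneg) auto
      have D: "I + sigma2 k > 0" using I0 sigma2[OF k] by linarith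
      have "(cmod (hinner (h k) (w' k)))\<^sup>2 / (I + sigma2 k) \<ge> Gam k"
        using si'[OF k] unfolding sinr2_def I_def by simp
      then have "(cmod (hinner (h k) (w' k)))\<^sup>2 \<ge> Gam k * (I + sigma2 k)" using D by (simp add: le_divide_eq)
      then have "(cmod (hinner (h k) (w' k)))\<^sup>2 / Gam k - I \<ge> sigma2 k" using Gam[OF k] by (simp add: field_simps)
      then show "?thesis k" unfolding eI tr_outer_outer[OF hc[OF k] wc'[OF k]] .
    qed
    have "SDR42_feasible M K h (Bmat b) (Bdotmat b bd) Gam sigma2 P0 (\<lambda>k. outer (w' k)) R0' u'"
      unfolding SDR42_feasible_def using psd_outer wc' R0p' Mp' c pw' by (auto simp: tr_outer)
    then show "u' \<le> uss" by (rule smax)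
  qed
  have popt: "P42_optimal M K h (Bmat b) (Bdotmat b bd) Gam sigma2 P0 wopt R0opt uss"
    unfolding P42_optimal_def using feas maxP by blast
  have s1: "Sup {u. \<exists>w R0. P42_feasible M K h (Bmat b) (Bdotmat b bd) Gam sigma2 P0 w R0 u} = uss"
    by (rule cSup_eq_maximum) (use feas maxP in auto)
  have s2: "Sup {u. \<exists>W R0. SDR42_feasible M K h (Bmat b) (Bdotmat b bd) Gam sigma2 P0 W R0 u} = uss"
    by (rule cSup_eq_maximum) (use sf smax in auto)
  show ?thesis using part1 R0opsd popt s1 s2 by simp
qed

end
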